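(* Let $\mathbf L\in\mathbb R_+^{n\times k}$. If there exist $\mathbf p\in\operatorname{relint}(\Delta_n)$ and $c\in\mathbb R_+$ such that $\mathbf p^\top\boldsymbol\ell_t=c$ for all $t\in[k]$, then $\mathrm{CCdim}(\mathbf L)\ge\operatorname{affdim}(\mathbf L)-1$.
   Context: Notation: $[m]=\{1,\dots,m\}$; $\Delta_n=\{\mathbf p\in\mathbb R_+^n:\sum_i p_i=1\}$, with relative interior the points having all entries strictly positive. A loss matrix $\mathbf L\in\mathbb R_+^{n\times k}$ has columns $\boldsymbol\ell_t$, $t\in[k]$; $\operatorname{affdim}(\mathbf L)$ is the dimension of the affine hull of $\{\boldsymbol\ell_1,\dots,\boldsymbol\ell_k\}$. Standing assumption: for each $t\in[k]$ there is $\mathbf q\in\Delta_n$ with $\operatorname{argmin}_{t'}\mathbf q^\top\boldsymbol\ell_{t'}=\{t\}$. A surrogate loss $\boldsymbol\psi:\mathcal C\to\mathbb R_+^n$ ($\mathcal C\subseteq\mathbb R^d$ convex) is $\mathbf L$-calibrated if there is $\mathrm{pred}:\mathcal C\to[k]$ such that for all $\mathbf q\in\Delta_n$: $\inf_{\mathbf u\in\mathcal C:\mathrm{pred}(\mathbf u)\notin\operatorname{argmin}_t\mathbf q^\top\boldsymbol\ell_t}\mathbf q^\top\boldsymbol\psi(\mathbf u)>\inf_{\mathbf u\in\mathcal C}\mathbf q^\top\boldsymbol\psi(\mathbf u)$. $\mathrm{CCdim}(\mathbf L)$ is the smallest $d\in\mathbb Z_+$ for which there exist a convex set $\mathcal C\subseteq\mathbb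 R^d$ and a convex (componentwise convex) $\mathbf L$-calibrated surrogate $\boldsymbol\psi:\mathcal C\to\mathbb R_+^n$ ($\infty$ if none exists). *)

theory Defs
  imports "HOL-Analysis.Analysis" "HOL-Library.Extended_Nat"
begin

text \<open>The loss matrix L (n x k, n outcomes, k predictions) is a
  real matrix of type real^'k^'n (rows indexed by outcomes 'n, columns by
  predictions 'k); its t-th column is column t L :: real^'n.
  Since the surrogate dimension d varies inside the definition of CCdim,
  vectors of R^d are represented as functions nat => real vanishing
  outside {..<d}.\<close>

definition prob_simplex :: "(real^'n) set" where
  "prob_simplex = {p. (\<forall>i. 0 \<le> p $ i) \<and> sum (\<lambda>i. p $ i) UNIV = 1}"

definition relint_prob_simplex :: "(real^'n) set" where
  "relint_prob_simplex = {p. (\<forall>i. 0 < p $ i) \<and> sum (\<lambda>i. p $ i) UNIV = 1}"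

definition Rvec :: "nat \<Rightarrow> (nat \<Rightarrow> real) set" where
  "Rvec d = {u. \<forall>i\<ge>d. u i = 0}"

definition comb :: "real \<Rightarrow> (nat \<Rightarrow> real) \<Rightarrow> (nat \<Rightarrow> real) \<Rightarrow> (nat \<Rightarrow> real)" where
  "comb \<theta> u v = (\<lambda>i. \<theta> * u i + (1 - \<theta>) * v i)"

definition convex_set :: "(nat \<Rightarrow> real) set \<Rightarrow> bool" where
  "convex_set C \<longleftrightarrow> (\<forall>u\<in>C. \<forall>v\<in>C. \<forall>\<theta>::real. 0 \<le> \<theta> \<and> \<theta> \<le> 1 \<longrightarrow> comb \<theta> u v \<in> C)"

definition convex_fun_on :: "(nat \<Rightarrow> real) set \<Rightarrow> ((nat \<Rightarrow> real) \<Rightarrow> real) \<Rightarrow> bool" where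
  "convex_fun_on C f \<longleftrightarrow> (\<forall>u\<in>C. \<forall>v\<in>C. \<forall>\<theta>::real. 0 \<le> \<theta> \<and> \<theta> \<le> 1 \<longrightarrow>
      f (comb \<theta> u v) \<le> \<theta> * f u + (1 - \<theta>) * f v)"

definition argmin_loss :: "real^'k^'n \<Rightarrow> real^'n \<Rightarrow> 'k set" where
  "argmin_loss L q = {t. \<forall>t'. q \<bullet> column t L \<le> q \<bullet> column t' L}"

text \<open>L-calibration of psi : C -> R_+^n. Infima are taken in the extended
  reals, so that the infimum over an empty set is +infinity.\<close>
definition calibrated ::
  "real^'k^'n \<Rightarrow> (nat \<Rightarrow> real) set \<Rightarrow> ((nat \<Rightarrow> real) \<Rightarrow> real^'n) \<Rightarrow> bool" where
  "calibrated L C psi \<longleftrightarrow> (\<exists>pred :: (nat \<Rightarrow> real) \<Rightarrow> 'k.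
     \<forall>q\<in>prob_simplex.
       (INF u\<in>{u\<in>C. pred u \<notin> argmin_loss L q}. ereal (q \<bullet> psi u))
         > (INF u\<in>C. ereal (q \<bullet> psi u)))"

definition convex_calibrated_surrogate_exists :: "real^'k^'n \<Rightarrow> nat \<Rightarrow> bool" where
  "convex_calibrated_surrogate_exists L d \<longleftrightarrow>
     (\<exists>C psi. C \<subseteq> Rvec d \<and> convex_set C \<and>
        (\<forall>u\<in>C. \<forall>y. 0 \<le> psi u $ y) \<and>
        (\<forall>y. convex_fun_on C (\<lambda>u. psi u $ y)) \<and>
        calibrated L C psi)"

text \<open>CCdim: smallest d, or infinity if none (Inf {} = infinity in enat)\<close>
definition CCdim :: "real^'k^'n \<Rightarrow> enat" where
  "CCdim L = (INF d\<in>{d. convex_calibrated_surrogate_exists L d}. enat d)"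

definition affdim :: "real^'k^'n \<Rightarrow> int" where
  "affdim L = aff_dim (range (\<lambda>t. column t L))"

end

theory Submission
  imports Defs
begin


lemma lin_bound_zero:
  fixes c K :: real
  assumes "\<And>t. K \<le> t * c"
  shows "c = 0"
proof (rule ccontr)
  assume "c \<noteq> 0"
  then have "K \<le> ((K - 1) / c) * c" using assms by blast
  with \<open>c \<noteq> 0\<close> show False by simp
qed

lemma lin_bound_nonpos:
  fixes c K :: real
  assumes "\<And>t. t \<ge> 0 \<Longrightarrow> t * c \<le> K"
  shows "c \<le> 0"
proof (rule ccontr)
  assume "\<not> c \<le> 0"
  then have c: "c > 0" by simp
  have "((\<bar>K\<bar> + 1) / c) * c \<le> K" by (rule assms) (use c in simp)
  with c have "\<bar>K\<bar> + 1 \<le> K" by simp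
  then show False using abs_ge_self[of K] by linarith
qed

lemma sep_step:
  fixes C :: "'a::euclidean_space set" and f :: "'n::finite \<Rightarrow> 'a \<Rightarrow> real" and F :: real
  assumes conv: "convex C" and u0: "u0 \<in> rel_interior C"
    and cvx: "\<And>y u v \<theta>. u\<in>C \<Longrightarrow> v\<in>C \<Longrightarrow> 0\<le>\<theta> \<Longrightarrow> \<theta>\<le>1 \<Longrightarrow>
         f y (\<theta> *\<^sub>R u + (1-\<theta>) *\<^sub>R v) \<le> \<theta> * f y u + (1-\<theta>) * f y v"
    and lowF: "\<And>u. u\<in>C \<Longrightarrow> F \<le> (\<Sum>y\<in>UNIV. f y u)"
  shows "\<exists>lam::'n \<Rightarrow> 'a. sum lam UNIV = 0 \<and> (\<forall>y. lam y \<in> span ((\<lambda>x. -u0 + x) ` C)) \<and>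
           (\<forall>v. (\<forall>y. v y \<in> C) \<longrightarrow> F \<le> (\<Sum>y\<in>UNIV. f y (v y) - lam y \<bullet> v y))"
proof -
  define S where "S = span ((\<lambda>x. -u0 + x) ` C)"
  define T where "T = {x::'a. \<forall>z\<in>S. x \<bullet> z = 0}"
  have u0C: "u0 \<in> C" using u0 rel_interior_subset by auto
  have T0: "0 \<in> T" and Tadd: "\<And>x y. x\<in>T \<Longrightarrow> y\<in>T \<Longrightarrow> x+y \<in> T" 
    and Tscale: "\<And>c x. x\<in>T \<Longrightarrow> c *\<^sub>R x \<in> T"
    by (auto simp: T_def inner_add_left)
  have Tdiff: "\<And>x y. x\<in>T \<Longrightarrow> y\<in>T \<Longrightarrow> x-y \<in> T" by (auto simp: T_def inner_diff_left)
  have ST: "\<And>x. x\<in>S \<Longrightarrow> x\<in>T \<Longrightarrow> x = 0" by (auto simp: T_def)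
  have CS: "\<And>x. x\<in>C \<Longrightarrow> -u0 + x \<in> S" unfolding S_def by (simp add: span_base)
  have Sdiff: "\<And>x y. x\<in>S \<Longrightarrow> y\<in>S \<Longrightarrow> x-y \<in> S" unfolding S_def by (simp add: span_diff)
  obtain e where e: "e>0" "ball u0 e \<inter> affine hull C \<subseteq> C" using u0 mem_rel_interior_ball by blast
  have ahC: "affine hull C = (\<lambda>x. u0+x) ` S"
    unfolding S_def by (rule affine_hull_span_gen) (simp add: u0C hull_inc)
  have pert: "u0 + \<delta> \<in> C" if "\<delta>\<in>S" "norm \<delta> < e" for \<delta>
  proof -
    have "u0 + \<delta> \<in> affine hull C" using ahC that by auto
    moreover have "u0 + \<delta> \<in> ball u0 e" using that by (simp add: dist_norm)
    ultimately show ?thesis using e by auto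
  qed
  define P where "P = (\<lambda>v::'a^'n. \<Sum>y\<in>UNIV. f y (v$y))"
  define A where "A = {(v::'a^'n, r::real). (\<forall>y. v$y \<in> C) \<and> P v \<le> r}"
  define B where "B = {(v::'a^'n, r::real). (\<exists>u. \<forall>y. v$y - u \<in> T) \<and> r < F}"
  have convA: "convex A"
    unfolding convex_def
  proof (intro ballI allI impI)
    fix x z and a b :: real
    assume x: "x\<in>A" and z: "z\<in>A" and ab: "0 \<le> a" "0 \<le> b" "a+b = 1"
    obtain v1 r1 where x': "x = (v1,r1)" by (cases x)
    obtain v2 r2 where z': "z = (v2,r2)" by (cases z)
    have v1: "\<forall>y. v1$y \<in> C" "P v1 \<le> r1" using x x' A_def by auto
    have v2: "\<forall>y. v2$y \<in> C" "P v2 \<le> r2" using z z' A_def by auto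
    have b': "b = 1 - a" using ab by simp
    have inC: "\<forall>y. (a *\<^sub>R v1 + b *\<^sub>R v2)$y \<in> C"
      using v1(1) v2(1) ab conv unfolding convex_def by simp
    have "P (a *\<^sub>R v1 + b *\<^sub>R v2) \<le> (\<Sum>y\<in>UNIV. a * f y (v1$y) + b * f y (v2$y))"
      unfolding P_def
    proof (rule sum_mono)
      fix y
      show "f y ((a *\<^sub>R v1 + b *\<^sub>R v2)$y) \<le> a * f y (v1$y) + b * f y (v2$y)"
        using cvx[of "v1$y" "v2$y" a y] v1(1) v2(1) ab b' by simp
    qed
    also have "\<dots> = a * P v1 + b * P v2" by (simp add: P_def sum.distrib sum_distrib_left)
    also have "\<dots> \<le> a * r1 + b * r2" using v1(2) v2(2) ab by (simp add: add_mono mult_left_mono)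
    finally show "a *\<^sub>R x + b *\<^sub>R z \<in> A" using inC by (simp add: A_def x' z')
  qed
  have convB: "convex B"
    unfolding convex_def
  proof (intro ballI allI impI)
    fix x z and a b :: real
    assume x: "x\<in>B" and z: "z\<in>B" and ab: "0 \<le> a" "0 \<le> b" "a+b = 1"
    obtain v1 r1 where x': "x = (v1,r1)" by (cases x)
    obtain v2 r2 where z': "z = (v2,r2)" by (cases z)
    obtain u1 where u1: "\<forall>y. v1$y - u1 \<in> T" "r1 < F" using x x' B_def by auto
    obtain u2 where u2: "\<forall>y. v2$y - u2 \<in> T" "r2 < F" using z z' B_def by auto
    have "\<forall>y. (a *\<^sub>R v1 + b *\<^sub>R v2)$y - (a *\<^sub>R u1 + b *\<^sub>R u2) \<in> T"
    proof
      fix y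
      have "(a *\<^sub>R v1 + b *\<^sub>R v2)$y - (a *\<^sub>R u1 + b *\<^sub>R u2) = a *\<^sub>R (v1$y - u1) + b *\<^sub>R (v2$y - u2)"
        by (simp add: algebra_simps)
      then show "(a *\<^sub>R v1 + b *\<^sub>R v2)$y - (a *\<^sub>R u1 + b *\<^sub>R u2) \<in> T"
        using u1 u2 Tadd Tscale by simp
    qed
    moreover have "a * r1 + b * r2 < F"
    proof -
      have 1: "a*r1 \<le> a*F" "b*r2 \<le> b*F" using ab u1 u2 by (auto intro: mult_left_mono)
      have 2: "a*r1 < a*F \<or> b*r2 < b*F"
      proof (cases "a = 0")
        case True then show ?thesis using ab u2 by simp
      next
        case False then show ?thesis using ab u1 by simp
      qed
      have "a*F + b*F = F" by (metis ab(3) distrib_right mult_1)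
      then show ?thesis using 1 2 by linarith
    qed
    ultimately show "a *\<^sub>R x + b *\<^sub>R z \<in> B" by (auto simp: B_def x' z')
  qed
  have neA: "((\<chi> y. u0), P (\<chi> y. u0)) \<in> A" using u0C by (simp add: A_def)
  have neB: "((\<chi> y. u0), F - 1) \<in> B" using T0 by (auto simp: B_def intro: exI[of _ u0])
  have disj: "A \<inter> B = {}"
  proof (rule ccontr)
    assume "A \<inter> B \<noteq> {}"
    then obtain v r where vA: "(v,r) \<in> A" and vB: "(v,r) \<in> B" by auto
    obtain u where u: "\<forall>y. v$y - u \<in> T" and rF: "r < F" using vB B_def by auto
    have vC: "\<forall>y. v$y \<in> C" and Pr: "P v \<le> r" using vA A_def by auto
    obtain y0 :: 'n where True by simp
    have eq: "v$y = v$y0" for y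
    proof -
      have "v$y - v$y0 \<in> T" using Tdiff[OF u[rule_format, of y] u[rule_format, of y0]] by simp
      moreover have "v$y - v$y0 \<in> S" using Sdiff[OF CS CS, of "v$y" "v$y0"] vC by (simp add: algebra_simps)
      ultimately show ?thesis using ST by force
    qed
    have "P v = (\<Sum>y\<in>UNIV. f y (v$y0))" unfolding P_def by (metis eq)
    then have "F \<le> P v" using lowF vC by simp
    then show False using Pr rF by simp
  qed
  obtain a b where ab: "a \<noteq> 0" "\<forall>x\<in>A. a \<bullet> x \<le> b" "\<forall>x\<in>B. a \<bullet> x \<ge> b"
    using separating_hyperplane_sets[OF convA convB _ _ disj] neA neB by blast
  obtain Lam \<beta> where a': "a = (Lam, \<beta>)" by (cases a)
  have hA: "Lam \<bullet> v + \<beta> * r \<le> b" if "\<forall>y. v$y \<in> C" "P v \<le> r" for v r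
    using ab(2) that by (auto simp: A_def a')
  have hB: "Lam \<bullet> v + \<beta> * r \<ge> b" if "\<forall>y. v$y - u \<in> T" "r < F" for v u r
    using ab(3) that by (auto simp: B_def a')
  define v0 :: "'a^'n" where "v0 = (\<chi> y. u0)"
  have v0C: "\<forall>y. v0$y \<in> C" using u0C by (simp add: v0_def)
  have Lamconst: "Lam \<bullet> (\<chi> y. w) = sum (\<lambda>y. Lam$y) UNIV \<bullet> w" for w
    by (simp add: inner_vec_def inner_sum_left)
  have \<beta>le: "\<beta> \<le> 0"
  proof (rule lin_bound_nonpos[of _ "b - Lam \<bullet> v0 - \<beta> * P v0"])
    fix t :: real assume "t \<ge> 0"
    then have "Lam \<bullet> v0 + \<beta> * (P v0 + t) \<le> b" using hA[OF v0C] by simp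
    then show "t * \<beta> \<le> b - Lam \<bullet> v0 - \<beta> * P v0" by (simp add: algebra_simps)
  qed
  define sL where "sL = sum (\<lambda>y. Lam$y) UNIV"
  have sL0: "sL = 0"
  proof -
    have "sL \<bullet> sL = 0"
    proof (rule lin_bound_zero[of "b - \<beta> * (F - 1)"])
      fix t :: real
      have "b \<le> Lam \<bullet> (\<chi> y. t *\<^sub>R sL) + \<beta> * (F - 1)"
        by (rule hB[of _ "t *\<^sub>R sL"]) (simp_all add: T0)
      then show "b - \<beta> * (F - 1) \<le> t * (sL \<bullet> sL)"
        by (simp add: Lamconst sL_def)
    qed
    then show ?thesis by simp
  qed
  have Lamy: "Lam \<bullet> (\<chi> z. if z = y then u0 + s else u0) = Lam$y \<bullet> s" for y s
  proof -
    have "Lam \<bullet> (\<chi> z. if z = y then u0 + s else u0) = (\<Sum>z\<in>UNIV. Lam$z \<bullet> u0 + (if z = y then Lam$z \<bullet> s else 0))"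
      unfolding inner_vec_def by (rule sum.cong) (auto simp: inner_add_right)
    also have "\<dots> = sL \<bullet> u0 + Lam$y \<bullet> s"
      by (simp add: sum.distrib sL_def inner_sum_left)
    finally show ?thesis using sL0 by simp
  qed
  have LamT: "Lam$y \<bullet> s = 0" if "s \<in> T" for y s
  proof (rule lin_bound_zero[of "b - \<beta> * (F - 1)"])
    fix t :: real
    have "\<forall>z. (\<chi> z. if z = y then u0 + t *\<^sub>R s else u0)$z - u0 \<in> T"
      using that T0 Tscale by auto
    then have "b \<le> Lam \<bullet> (\<chi> z. if z = y then u0 + t *\<^sub>R s else u0) + \<beta> * (F - 1)"
      by (intro hB) auto
    then show "b - \<beta> * (F - 1) \<le> t * (Lam$y \<bullet> s)" by (simp add: Lamy)
  qed
  have LamS: "Lam$y \<in> S" for y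
  proof -
    obtain y1 z1 where yz: "y1 \<in> span S" "\<And>w. w \<in> span S \<Longrightarrow> orthogonal z1 w" "Lam$y = y1 + z1"
      using orthogonal_subspace_decomp_exists[of S "Lam$y"] by blast
    have z1T: "z1 \<in> T" using yz(2) unfolding T_def orthogonal_def by (simp add: span_base)
    have "y1 \<bullet> z1 = 0" using yz(1,2) by (simp add: orthogonal_def inner_commute)
    then have "z1 \<bullet> z1 = 0" using LamT[OF z1T, of y] yz(3) by (simp add: inner_add_left)
    then have "z1 = 0" by simp
    then show ?thesis using yz(1,3) unfolding S_def by (simp add: span_span)
  qed
  have \<beta>ne: "\<beta> \<noteq> 0"
  proof
    assume \<beta>0: "\<beta> = 0"
    have "Lam \<bullet> v0 = 0" using Lamconst sL0 by (simp add: v0_def sL_def)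
    then have b0: "b = 0" using hA[OF v0C order.refl] hB[of v0 u0 "F - 1"] T0 \<beta>0
      by (simp add: v0_def)
    have small: "Lam$y \<bullet> \<delta> \<le> 0" if "\<delta> \<in> S" "norm \<delta> < e" for y \<delta>
    proof -
      have "\<forall>z. (\<chi> z. if z = y then u0 + \<delta> else u0)$z \<in> C" using pert[OF that] u0C by simp
      from hA[OF this order.refl] show ?thesis using \<beta>0 b0 by (simp add: Lamy)
    qed
    have LamS0: "Lam$y \<bullet> \<delta> = 0" if "\<delta> \<in> S" for y \<delta>
    proof (cases "\<delta> = 0")
      case True then show ?thesis by simp
    next
      case False
      define c where "c = e / (2 * norm \<delta>)"
      have cpos: "c > 0" using e False by (simp add: c_def)
      have nc: "norm (c *\<^sub>R \<delta>) < e" using e False by (simp add: c_def)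
      have ncm: "norm (- (c *\<^sub>R \<delta>)) < e" using nc by simp
      have S1: "c *\<^sub>R \<delta> \<in> S" "- (c *\<^sub>R \<delta>) \<in> S" using that unfolding S_def
        by (simp_all add: span_scale span_neg)
      have "Lam$y \<bullet> (c *\<^sub>R \<delta>) \<le> 0" "Lam$y \<bullet> (- (c *\<^sub>R \<delta>)) \<le> 0"
        using small[OF S1(1) nc] small[OF S1(2) ncm] by auto
      then have "c * (Lam$y \<bullet> \<delta>) = 0" by simp
      then show ?thesis using cpos by simp
    qed
    have "Lam$y = 0" for y
    proof -
      have "Lam$y \<bullet> Lam$y = 0" using LamS0[OF LamS] .
      then show ?thesis by simp
    qed
    then have "Lam = 0" by (simp add: vec_eq_iff)
    then show False using ab(1) a' \<beta>0 by (simp add: zero_prod_def)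
  qed
  define \<gamma> where "\<gamma> = - \<beta>"
  have \<gamma>pos: "\<gamma> > 0" using \<beta>le \<beta>ne by (simp add: \<gamma>_def)
  have Fb: "F \<le> - b / \<gamma>"
  proof (rule dense_le)
    fix r assume "r < F"
    then have "b \<le> Lam \<bullet> v0 + \<beta> * r" by (intro hB[of _ u0]) (simp_all add: v0_def T0)
    then have "b \<le> - \<gamma> * r" using Lamconst sL0 by (simp add: v0_def sL_def \<gamma>_def)
    then show "r \<le> - b / \<gamma>" using \<gamma>pos by (simp add: field_simps)
  qed
  define lam where "lam = (\<lambda>y. (1 / \<gamma>) *\<^sub>R Lam$y)"
  show ?thesis
  proof (intro exI[of _ lam] conjI allI impI)
    show "sum lam UNIV = 0" using sL0 by (simp add: lam_def sL_def scaleR_sum_right[symmetric])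
    fix y show "lam y \<in> span ((\<lambda>x. -u0 + x) ` C)" using LamS[of y] unfolding S_def lam_def
      by (simp add: span_scale)
  next
    fix v :: "'n \<Rightarrow> 'a" assume vC: "\<forall>y. v y \<in> C"
    have "Lam \<bullet> (\<chi> y. v y) + \<beta> * P (\<chi> y. v y) \<le> b" using hA[of "\<chi> y. v y"] vC by simp
    then have "- b / \<gamma> \<le> P (\<chi> y. v y) - (1/\<gamma>) * (Lam \<bullet> (\<chi> y. v y))"
      using \<gamma>pos by (simp add: field_simps \<gamma>_def)
    also have "\<dots> = (\<Sum>y\<in>UNIV. f y (v y) - lam y \<bullet> v y)"
      by (simp add: P_def lam_def inner_vec_def sum_subtractf sum_distrib_left)
    finally show "F \<le> (\<Sum>y\<in>UNIV. f y (v y) - lam y \<bullet> v y)" using Fb by simp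
  qed
qed
lemma subspace_hyps: "subspace {x::'b::euclidean_space. \<forall>a\<in>A. a \<bullet> x = 0}"
  unfolding subspace_def by (auto simp: inner_add_right inner_scaleR_right)

lemma dim_hyperplanes:
  fixes A :: "'b::euclidean_space set"
  assumes "finite A"
  shows "DIM('b) \<le> dim {x. \<forall>a\<in>A. a \<bullet> x = 0} + card A"
  using assms
proof (induction A rule: finite_induct)
  case empty
  then show ?case by (simp add: dim_UNIV)
next
  case (insert a A)
  define K where "K = {x::'b. \<forall>a\<in>A. a \<bullet> x = 0}"
  have K': "{x. \<forall>b\<in>insert a A. b \<bullet> x = 0} = K \<inter> {x. a \<bullet> x = 0}" by (auto simp: K_def)
  have "dim K \<le> dim (K \<inter> {x. a \<bullet> x = 0}) + 1"
  proof (cases "a = 0")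
    case True
    then show ?thesis by simp
  next
    case False
    have "dim {x + y |x y. x \<in> K \<and> y \<in> {x. a \<bullet> x = 0}} + dim (K \<inter> {x. a \<bullet> x = 0}) = dim K + dim {x. a \<bullet> x = 0}"
      by (rule dim_sums_Int) (simp_all add: K_def subspace_hyps subspace_hyperplane)
    moreover have "dim {x + y |x y. x \<in> K \<and> y \<in> {x. a \<bullet> x = 0}} \<le> DIM('b)" by (rule dim_subset_UNIV)
    moreover have "dim {x. a \<bullet> x = 0} = DIM('b) - 1" using False by (rule dim_hyperplane)
    moreover have "DIM('b) > 0" by simp
    ultimately show ?thesis by linarith
  qed
  then show ?case using insert unfolding K' by (simp add: K_def)
qed

lemma core:
  fixes L :: "real^'k^'n" and C :: "'a::euclidean_space set" and psi :: "'a \<Rightarrow> real^'n"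
    and pred :: "'a \<Rightarrow> 'k"
  assumes conv: "convex C" and ne: "C \<noteq> {}"
    and cvx: "\<And>y u v \<theta>. u\<in>C \<Longrightarrow> v\<in>C \<Longrightarrow> 0\<le>\<theta> \<Longrightarrow> \<theta>\<le>1 \<Longrightarrow>
         psi (\<theta> *\<^sub>R u + (1-\<theta>) *\<^sub>R v) $ y \<le> \<theta> * psi u $ y + (1-\<theta>) * psi v $ y"
    and nn: "\<And>u y. u\<in>C \<Longrightarrow> 0 \<le> psi u $ y"
    and p: "p \<in> relint_prob_simplex" and pc: "\<forall>t. p \<bullet> column t L = c"
    and cal: "\<forall>q\<in>prob_simplex. (INF u\<in>{u\<in>C. pred u \<notin> argmin_loss L q}. ereal (q \<bullet> psi u))
                 > (INF u\<in>C. ereal (q \<bullet> psi u))"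
  shows "aff_dim (range (\<lambda>t. column t L)) \<le> 1 + aff_dim C"
proof -
  obtain u0 where u0: "u0 \<in> rel_interior C" using rel_interior_eq_empty[OF conv] ne by blast
  have u0C: "u0 \<in> C" using u0 rel_interior_subset by auto
  have ppos: "\<And>y. 0 < p$y" and psum: "sum (\<lambda>y. p$y) UNIV = 1" using p by (auto simp: relint_prob_simplex_def)
  have qpsi: "q \<bullet> psi u = (\<Sum>y\<in>UNIV. q$y * psi u $ y)" for q u by (simp add: inner_vec_def)
  define F where "F = Inf ((\<lambda>u. p \<bullet> psi u) ` C)"
  have bddF: "bdd_below ((\<lambda>u. p \<bullet> psi u) ` C)"
  proof (rule bdd_belowI[of _ 0])
    fix x assume "x \<in> (\<lambda>u. p \<bullet> psi u) ` C"
    then obtain u where "u \<in> C" "x = p \<bullet> psi u" by auto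
    moreover have "\<And>y. 0 \<le> p$y * psi u $ y" using nn[OF \<open>u \<in> C\<close>] ppos by (simp add: less_imp_le)
    ultimately show "0 \<le> x" by (simp add: qpsi sum_nonneg)
  qed
  have lowF: "F \<le> (\<Sum>y\<in>UNIV. p$y * psi u $ y)" if "u \<in> C" for u
    unfolding F_def qpsi[symmetric] using that bddF by (auto intro: cInf_lower)
  have cvx': "p$y * psi (\<theta> *\<^sub>R u + (1-\<theta>) *\<^sub>R v) $ y \<le> \<theta> * (p$y * psi u $ y) + (1-\<theta>) * (p$y * psi v $ y)"
    if "u\<in>C" "v\<in>C" "0\<le>\<theta>" "\<theta>\<le>1" for y u v \<theta>
  proof -
    have "p$y * psi (\<theta> *\<^sub>R u + (1-\<theta>) *\<^sub>R v) $ y \<le> p$y * (\<theta> * psi u $ y + (1-\<theta>) * psi v $ y)"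
      using cvx[OF that] ppos[of y] by (simp add: mult_left_mono)
    then show ?thesis by (simp add: algebra_simps)
  qed
  obtain lam :: "'n \<Rightarrow> 'a" where lam0: "sum lam UNIV = 0"
    and lamS: "\<forall>y. lam y \<in> span ((\<lambda>x. -u0 + x) ` C)"
    and lamF: "\<forall>v. (\<forall>y. v y \<in> C) \<longrightarrow> F \<le> (\<Sum>y\<in>UNIV. p$y * psi (v y) $ y - lam y \<bullet> v y)"
    using sep_step[OF conv u0, of "\<lambda>y u. p$y * psi u $ y" F] cvx' lowF by blast
  define h where "h = (\<lambda>y u. p$y * psi u $ y - lam y \<bullet> u)"
  have sumh: "(\<Sum>y\<in>UNIV. h y u) = p \<bullet> psi u" for u
    by (simp add: h_def sum_subtractf qpsi inner_sum_left[symmetric] lam0)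
  have "\<forall>j::nat. \<exists>u\<in>C. p \<bullet> psi u < F + 1 / real (Suc j)"
  proof
    fix j :: nat
    have "Inf ((\<lambda>u. p \<bullet> psi u) ` C) < F + 1 / real (Suc j)" by (simp add: F_def)
    then show "\<exists>u\<in>C. p \<bullet> psi u < F + 1 / real (Suc j)" using cInf_lessD[of "(\<lambda>u. p \<bullet> psi u) ` C"] ne
      by blast
  qed
  then obtain useq where useqC: "\<And>j. useq j \<in> C" and useqF: "\<And>j. p \<bullet> psi (useq j) < F + 1 / real (Suc j)"
    by metis
  have key: "h y (useq j) \<le> h y w + 1 / real (Suc j)" if "w \<in> C" for y j w
  proof -
    define v where "v = (\<lambda>z. if z = y then w else useq j)"
    have "F \<le> (\<Sum>z\<in>UNIV. h z (v z))" using lamF that useqC by (auto simp: v_def h_def)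
    also have "\<dots> = (\<Sum>z\<in>UNIV. h z (useq j) + (if z = y then h y w - h y (useq j) else 0))"
      by (rule sum.cong) (auto simp: v_def)
    also have "\<dots> = p \<bullet> psi (useq j) + (h y w - h y (useq j))"
      by (simp add: sum.distrib sumh)
    finally show ?thesis using useqF[of j] by simp
  qed
  have finK: "finite ((pred \<circ> useq) ` UNIV)" by simp
  obtain j0 where infJ: "infinite {j. pred (useq j) = pred (useq j0)}"
    using pigeonhole_infinite[OF infinite_UNIV_nat finK] by auto
  define t where "t = pred (useq j0)"
  define J where "J = {j. pred (useq j) = t}"
  have infJ': "infinite J" using infJ by (simp add: J_def t_def)
  have Q: "t \<in> argmin_loss L q"
    if qs: "q \<in> prob_simplex" and qlam: "(\<Sum>y\<in>UNIV. (q$y / p$y) *\<^sub>R lam y) = 0" for q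
  proof (rule ccontr)
    assume tn: "t \<notin> argmin_loss L q"
    have qnn: "\<And>y. 0 \<le> q$y" using qs by (simp add: prob_simplex_def)
    define R where "R = (\<Sum>y\<in>UNIV. q$y / p$y)"
    have qh: "q \<bullet> psi u = (\<Sum>y\<in>UNIV. (q$y / p$y) * h y u)" for u
    proof -
      have "(\<Sum>y\<in>UNIV. (q$y / p$y) * h y u) = (\<Sum>y\<in>UNIV. q$y * psi u $ y) - (\<Sum>y\<in>UNIV. (q$y / p$y) * (lam y \<bullet> u))"
        using ppos by (simp add: h_def right_diff_distrib sum_subtractf less_imp_neq[THEN not_sym])
      also have "(\<Sum>y\<in>UNIV. (q$y / p$y) * (lam y \<bullet> u)) = (\<Sum>y\<in>UNIV. (q$y / p$y) *\<^sub>R lam y) \<bullet> u"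
        by (simp add: inner_sum_left)
      finally show ?thesis using qlam by (simp add: qpsi)
    qed
    have bound: "q \<bullet> psi (useq j) \<le> q \<bullet> psi w + R / real (Suc j)" if "w \<in> C" for j w
    proof -
      have "(\<Sum>y\<in>UNIV. (q$y / p$y) * h y (useq j)) \<le> (\<Sum>y\<in>UNIV. (q$y / p$y) * (h y w + 1 / real (Suc j)))"
        by (rule sum_mono, rule mult_left_mono) (use key[OF that] qnn ppos in \<open>auto intro: divide_nonneg_pos less_imp_le\<close>)
      also have "\<dots> = q \<bullet> psi w + R / real (Suc j)"
        by (simp add: qh distrib_left sum.distrib R_def sum_divide_distrib)
      finally show ?thesis by (simp add: qh)
    qed
    define I where "I = (INF u\<in>C. ereal (q \<bullet> psi u))"
    define bad where "bad = (INF u\<in>{u\<in>C. pred u \<notin> argmin_loss L q}. ereal (q \<bullet> psi u))"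
    have Ibad: "I < bad" using cal qs by (simp add: I_def bad_def)
    have badj: "bad \<le> ereal (q \<bullet> psi (useq j))" if "j \<in> J" for j
      unfolding bad_def using that tn useqC by (auto simp: J_def intro!: INF_lower)
    have Ij: "ereal (q \<bullet> psi (useq j) - R / real (Suc j)) \<le> I" for j
      unfolding I_def by (rule INF_greatest) (use bound in \<open>force simp: algebra_simps\<close>)
    obtain j1 where j1: "j1 \<in> J" using infJ' by (metis finite.emptyI ex_in_conv)
    have "I \<noteq> \<infinity>" using Ibad badj[OF j1] by auto
    moreover have "I \<noteq> -\<infinity>" using Ij[of j1] by auto
    ultimately obtain i where Ii: "I = ereal i" by (cases I) auto
    have "bad \<noteq> \<infinity>" using badj[OF j1] by auto
    moreover have "bad \<noteq> -\<infinity>" using Ibad Ii by auto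
    ultimately obtain bb where bbb: "bad = ereal bb" by (cases bad) auto
    have ib: "i < bb" using Ibad Ii bbb by simp
    have R0: "0 \<le> R" unfolding R_def using qnn ppos by (auto intro!: sum_nonneg divide_nonneg_pos)
    obtain j where jJ: "j \<in> J" and jbig: "j > nat \<lceil>R / (bb - i)\<rceil>"
      using infJ' unfolding infinite_nat_iff_unbounded by blast
    have "bb \<le> q \<bullet> psi (useq j)" using badj[OF jJ] bbb by simp
    moreover have "q \<bullet> psi (useq j) - R / real (Suc j) \<le> i" using Ij[of j] Ii by simp
    moreover have "R / real (Suc j) < bb - i"
    proof -
      have "R / (bb - i) < real (Suc j)" using jbig by linarith
      then have "R < real (Suc j) * (bb - i)" using ib by (simp add: divide_less_eq)
      then show ?thesis by (simp add: divide_less_eq mult.commute)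
    qed
    ultimately show False by linarith
  qed
  define col where "col = (\<lambda>s. column s L)"
  have orthW: "w \<bullet> col s = w \<bullet> col t"
    if w1: "sum (\<lambda>y. w$y) UNIV = 0" and w2: "(\<Sum>y\<in>UNIV. (w$y / p$y) *\<^sub>R lam y) = 0" for w s
  proof -
    define m where "m = Min (range (\<lambda>y. p$y))"
    have mpos: "m > 0" unfolding m_def using ppos by (subst Min_gr_iff) auto
    have mle: "m \<le> p$y" for y unfolding m_def by (rule Min_le) auto
    define M where "M = (\<Sum>y\<in>UNIV. \<bar>w$y\<bar>)"
    have wM: "\<bar>w$y\<bar> \<le> M" for y unfolding M_def by (rule member_le_sum) auto
    have M0: "0 \<le> M" unfolding M_def by (simp add: sum_nonneg)
    define \<epsilon> where "\<epsilon> = m / (M + 1)"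
    have \<epsilon>pos: "\<epsilon> > 0" using mpos M0 by (simp add: \<epsilon>_def)
    have qok: "t \<in> argmin_loss L (p + \<delta> *\<^sub>R w)" if d: "\<bar>\<delta>\<bar> = \<epsilon>" for \<delta>
    proof (rule Q)
      have "\<bar>\<delta> * w$y\<bar> < p$y" for y
      proof -
        have "\<bar>\<delta> * w$y\<bar> = \<epsilon> * \<bar>w$y\<bar>" using d by (simp add: abs_mult)
        also have "\<dots> \<le> \<epsilon> * M" using wM \<epsilon>pos by (simp add: mult_left_mono)
        also have "\<dots> < m" using mpos M0 by (simp add: \<epsilon>_def field_simps)
        finally show ?thesis using mle[of y] by simp
      qed
      then have "0 \<le> p$y + \<delta> * w$y" for y by (smt (verit))
      moreover have "sum (\<lambda>y. p$y + \<delta> * w$y) UNIV = 1"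
        using psum w1 by (simp add: sum.distrib sum_distrib_left[symmetric])
      ultimately show "p + \<delta> *\<^sub>R w \<in> prob_simplex" by (simp add: prob_simplex_def)
      have "(\<Sum>y\<in>UNIV. ((p + \<delta> *\<^sub>R w)$y / p$y) *\<^sub>R lam y) = (\<Sum>y\<in>UNIV. lam y + \<delta> *\<^sub>R ((w$y / p$y) *\<^sub>R lam y))"
        using ppos by (intro sum.cong refl) (simp add: add_divide_distrib scaleR_add_left less_imp_neq[THEN not_sym])
      also have "\<dots> = sum lam UNIV + \<delta> *\<^sub>R (\<Sum>y\<in>UNIV. (w$y / p$y) *\<^sub>R lam y)"
        by (simp only: sum.distrib scaleR_sum_right)
      also have "\<dots> = 0" using lam0 w2 by simp
      finally show "(\<Sum>y\<in>UNIV. ((p + \<delta> *\<^sub>R w)$y / p$y) *\<^sub>R lam y) = 0" .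
    qed
    have ineq: "\<delta> * (w \<bullet> col t) \<le> \<delta> * (w \<bullet> col s)" if "\<bar>\<delta>\<bar> = \<epsilon>" for \<delta>
    proof -
      have "(p + \<delta> *\<^sub>R w) \<bullet> column t L \<le> (p + \<delta> *\<^sub>R w) \<bullet> column s L"
        using qok[OF that] by (simp add: argmin_loss_def)
      then show ?thesis using pc by (simp add: inner_add_left col_def)
    qed
    have "\<epsilon> * (w \<bullet> col t) \<le> \<epsilon> * (w \<bullet> col s)" using ineq[of \<epsilon>] \<epsilon>pos by simp
    moreover have "(-\<epsilon>) * (w \<bullet> col t) \<le> (-\<epsilon>) * (w \<bullet> col s)" using ineq[of "-\<epsilon>"] \<epsilon>pos by simp
    ultimately have "w \<bullet> col t \<le> w \<bullet> col s" "w \<bullet> col s \<le> w \<bullet> col t"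
      using \<epsilon>pos by (simp_all add: mult_le_cancel_left_pos)
    then show ?thesis by simp
  qed
  define S where "S = span ((\<lambda>x. -u0 + x) ` C)"
  obtain Bs where Bs: "Bs \<subseteq> S" "independent Bs" "S \<subseteq> span Bs" "card Bs = dim S"
    using basis_exists[of S] by blast
  have finBs: "finite Bs" using Bs(2) finiteI_independent by blast
  define aa :: "'a \<Rightarrow> real^'n" where "aa = (\<lambda>b. \<chi> y. (lam y \<bullet> b) / p$y)"
  define A where "A = insert (1 :: real^'n) (aa ` Bs)"
  define W where "W = {w. \<forall>a\<in>A. a \<bullet> w = 0}"
  have finA: "finite A" using finBs by (simp add: A_def)
  have cardA: "card A \<le> 1 + dim S"
  proof -
    have "card A \<le> Suc (card (aa ` Bs))" unfolding A_def by (rule card_insert_le_m1) simp_all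
    also have "card (aa ` Bs) \<le> card Bs" by (rule card_image_le[OF finBs])
    finally show ?thesis using Bs(4) by simp
  qed
  have dimW: "DIM(real^'n) \<le> dim W + card A" unfolding W_def by (rule dim_hyperplanes[OF finA])
  have Wprop: "w \<bullet> col s = w \<bullet> col t" if "w \<in> W" for w s
  proof (rule orthW)
    have "1 \<bullet> w = 0" using that by (simp add: W_def A_def)
    then show "sum (\<lambda>y. w$y) UNIV = 0" by (simp add: inner_vec_def)
    define g where "g = (\<Sum>y\<in>UNIV. (w$y / p$y) *\<^sub>R lam y)"
    have "g \<in> S" unfolding g_def S_def
      by (intro span_sum span_scale) (use lamS in auto)
    then have gS: "g \<in> span Bs" using Bs(3) by blast
    have "orthogonal g b" if "b \<in> Bs" for b
    proof -
      have "aa b \<bullet> w = 0" using \<open>w \<in> W\<close> that by (simp add: W_def A_def)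
      moreover have "aa b \<bullet> w = g \<bullet> b" unfolding aa_def g_def
        by (simp add: inner_vec_def inner_sum_left inner_sum_right inner_commute mult.commute)
      ultimately show ?thesis by (simp add: orthogonal_def)
    qed
    then have "orthogonal g g" using orthogonal_to_span[OF gS] by blast
    then show "(\<Sum>y\<in>UNIV. (w$y / p$y) *\<^sub>R lam y) = 0" by (simp add: g_def orthogonal_def)
  qed
  define D where "D = span ((\<lambda>x. - col t + x) ` range col)"
  have WD: "W \<inter> D \<subseteq> {0}"
  proof
    fix w assume wWD: "w \<in> W \<inter> D"
    have "orthogonal w x" if "x \<in> (\<lambda>x. - col t + x) ` range col" for x
      using that Wprop[of w] wWD by (auto simp: orthogonal_def inner_add_right inner_diff_right)
    then have "orthogonal w w" using orthogonal_to_span[of w "(\<lambda>x. - col t + x) ` range col" w] wWD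
      by (simp add: D_def)
    then show "w \<in> {0}" by (simp add: orthogonal_def)
  qed
  have subW: "subspace W" unfolding W_def by (rule subspace_hyps)
  have "dim {x + y |x y. x \<in> W \<and> y \<in> D} + dim (W \<inter> D) = dim W + dim D"
    by (rule dim_sums_Int[OF subW]) (simp add: D_def)
  moreover have "dim (W \<inter> D) = 0" using WD by simp
  moreover have "dim {x + y |x y. x \<in> W \<and> y \<in> D} \<le> DIM(real^'n)" by (rule dim_subset_UNIV)
  ultimately have dimD: "dim D \<le> 1 + dim S" using dimW cardA by linarith
  have "aff_dim (range col) = int (dim ((+) (- col t) ` range col))"
    by (rule aff_dim_eq_dim) (simp add: hull_inc)
  also have "\<dots> = int (dim D)" by (simp add: D_def)
  finally have a1: "aff_dim (range col) = int (dim D)" .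
  have "aff_dim C = int (dim ((+) (- u0) ` C))"
    by (rule aff_dim_eq_dim) (simp add: hull_inc u0C)
  also have "\<dots> = int (dim S)" by (simp add: S_def)
  finally have a2: "aff_dim C = int (dim S)" .
  show ?thesis using a1 a2 dimD by (simp add: col_def)
qed



lemma surrogate_bound:
  fixes L :: "real^'k^'n"
  assumes p: "p \<in> relint_prob_simplex" and pc: "\<forall>t. p \<bullet> column t L = c"
    and ex: "convex_calibrated_surrogate_exists L d"
  shows "affdim L - 1 \<le> int d"
proof -
  obtain C psi where Cd: "C \<subseteq> Rvec d" and cC: "convex_set C" and nn: "\<forall>u\<in>C. \<forall>y. 0 \<le> psi u $ y"
    and cf: "\<forall>y. convex_fun_on C (\<lambda>u. psi u $ y)" and cal0: "calibrated L C psi"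
    using ex unfolding convex_calibrated_surrogate_exists_def by blast
  obtain pred :: "(nat \<Rightarrow> real) \<Rightarrow> 'k" where cal: "\<forall>q\<in>prob_simplex.
       (INF u\<in>{u\<in>C. pred u \<notin> argmin_loss L q}. ereal (q \<bullet> psi u)) > (INF u\<in>C. ereal (q \<bullet> psi u))"
    using cal0 unfolding calibrated_def by blast
  have pS: "p \<in> prob_simplex" using p by (auto simp: relint_prob_simplex_def prob_simplex_def less_imp_le)
  have Cne: "C \<noteq> {}"
  proof
    assume "C = {}"
    then show False using cal pS by auto
  qed
  define m where "m = CARD('n)"
  show ?thesis
  proof (cases "m \<le> d")
    case True
    have "affdim L \<le> int DIM(real^'n)" unfolding affdim_def by (rule aff_dim_le_DIM)
    then show ?thesis using True by (simp add: m_def)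
  next
    case False
    then have dm: "d < m" by simp
    obtain hh :: "nat \<Rightarrow> 'n" where hh: "bij_betw hh {0..<m} UNIV"
      using ex_bij_betw_nat_finite[of "UNIV :: 'n set"] by (auto simp: m_def)
    define ii where "ii = inv_into {0..<m} hh"
    have ii1: "ii i < m" for i using hh unfolding ii_def
      by (metis atLeastLessThan_iff bij_betw_def inv_into_into iso_tuple_UNIV_I)
    have ii2: "hh (ii i) = i" for i using hh unfolding ii_def
      by (metis bij_betw_def f_inv_into_f iso_tuple_UNIV_I)
    have ii3: "ii (hh j) = j" if "j < m" for j using hh that unfolding ii_def
      by (simp add: bij_betw_def inv_into_f_f)
    define e :: "(nat \<Rightarrow> real) \<Rightarrow> real^'n" where "e = (\<lambda>u. \<chi> i. u (ii i))"
    define einv where "einv = (\<lambda>x::real^'n. (\<lambda>j. if j < m then x $ hh j else 0))"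
    have einve: "einv (e u) = u" if "u \<in> C" for u
    proof
      fix j
      show "einv (e u) j = u j"
      proof (cases "j < m")
        case True then show ?thesis by (simp add: einv_def e_def ii3)
      next
        case False
        then have "u j = 0" using that Cd dm by (auto simp: Rvec_def)
        then show ?thesis using False by (simp add: einv_def)
      qed
    qed
    have ecomb: "e (comb \<theta> u v) = \<theta> *\<^sub>R e u + (1 - \<theta>) *\<^sub>R e v" for \<theta> u v
      by (simp add: vec_eq_iff e_def comb_def)
    define C' where "C' = e ` C"
    define psi' where "psi' = psi \<circ> einv"
    define pred' where "pred' = pred \<circ> einv"
    have convC': "convex C'"
      unfolding convex_def C'_def
    proof (intro ballI allI impI)
      fix x z and a b :: real
      assume "x \<in> e ` C" "z \<in> e ` C" "0 \<le> a" "0 \<le> b" "a + b = 1"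
      then obtain u v where uv: "u \<in> C" "v \<in> C" "x = e u" "z = e v" and b: "b = 1 - a" "a \<le> 1" by auto
      have "comb a u v \<in> C" using cC uv b \<open>0 \<le> a\<close> unfolding convex_set_def by blast
      then show "a *\<^sub>R x + b *\<^sub>R z \<in> e ` C" using uv b by (metis ecomb image_eqI)
    qed
    have C'ne: "C' \<noteq> {}" using Cne by (simp add: C'_def)
    have cvx: "psi' (\<theta> *\<^sub>R x + (1-\<theta>) *\<^sub>R z) $ y \<le> \<theta> * psi' x $ y + (1-\<theta>) * psi' z $ y"
      if xz: "x\<in>C'" "z\<in>C'" and th: "0\<le>\<theta>" "\<theta>\<le>1" for y x z \<theta>
    proof -
      obtain u v where uv: "u \<in> C" "v \<in> C" "x = e u" "z = e v" using xz unfolding C'_def by blast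
      have "comb \<theta> u v \<in> C" using cC uv th unfolding convex_set_def by blast
      then have "psi' (\<theta> *\<^sub>R x + (1-\<theta>) *\<^sub>R z) = psi (comb \<theta> u v)"
        by (simp add: psi'_def uv ecomb[symmetric] einve)
      also have "psi (comb \<theta> u v) $ y \<le> \<theta> * psi u $ y + (1-\<theta>) * psi v $ y"
        using cf uv th unfolding convex_fun_on_def by blast
      finally show ?thesis using uv by (simp add: psi'_def einve)
    qed
    have nn': "0 \<le> psi' x $ y" if "x \<in> C'" for x y
      using that nn by (auto simp: C'_def psi'_def einve)
    have cal': "\<forall>q\<in>prob_simplex. (INF x\<in>{x\<in>C'. pred' x \<notin> argmin_loss L q}. ereal (q \<bullet> psi' x))
                 > (INF x\<in>C'. ereal (q \<bullet> psi' x))"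
    proof
      fix q :: "real^'n" assume q: "q \<in> prob_simplex"
      have s1: "{x\<in>C'. pred' x \<notin> argmin_loss L q} = e ` {u\<in>C. pred u \<notin> argmin_loss L q}"
        by (auto simp: C'_def pred'_def einve)
      have "(INF x\<in>C'. ereal (q \<bullet> psi' x)) = (INF u\<in>C. ereal (q \<bullet> psi u))"
        unfolding C'_def image_image by (intro INF_cong refl) (simp add: psi'_def einve)
      moreover have "(INF x\<in>{x\<in>C'. pred' x \<notin> argmin_loss L q}. ereal (q \<bullet> psi' x))
            = (INF u\<in>{u\<in>C. pred u \<notin> argmin_loss L q}. ereal (q \<bullet> psi u))"
        unfolding s1 image_image by (intro INF_cong refl) (simp add: psi'_def einve)
      ultimately show "(INF x\<in>{x\<in>C'. pred' x \<notin> argmin_loss L q}. ereal (q \<bullet> psi' x))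
                 > (INF x\<in>C'. ereal (q \<bullet> psi' x))" using cal q by simp
    qed
    have main: "aff_dim (range (\<lambda>t. column t L)) \<le> 1 + aff_dim C'"
      by (rule core[OF convC' C'ne cvx nn' p pc cal']) auto
    define dd :: "(real^'n) set" where "dd = (\<lambda>j. axis (hh j) 1) ` {..<d}"
    define Sd where "Sd = {x::real^'n. \<forall>i\<in>Basis. i \<notin> dd \<longrightarrow> x \<bullet> i = 0}"
    have ddB: "dd \<subseteq> Basis" by (auto simp: dd_def Basis_vec_def)
    have dimSd: "dim Sd \<le> d"
    proof -
      have "dim Sd = card dd" unfolding Sd_def by (rule dim_substandard[OF ddB])
      also have "\<dots> \<le> d" unfolding dd_def using card_image_le[of "{..<d}"] by simp
      finally show ?thesis .
    qed
    have C'Sd: "C' \<subseteq> Sd"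
    proof
      fix x assume "x \<in> C'"
      then obtain u where u: "u \<in> C" "x = e u" by (auto simp: C'_def)
      show "x \<in> Sd" unfolding Sd_def mem_Collect_eq
      proof (intro ballI impI)
        fix i assume "i \<in> (Basis :: (real^'n) set)" "i \<notin> dd"
        then obtain i' where i': "i = axis i' 1" by (auto simp: Basis_vec_def)
        have "\<not> ii i' < d"
        proof
          assume "ii i' < d"
          then have "i \<in> dd" unfolding dd_def i' using ii2[of i'] by (metis image_eqI lessThan_iff)
          then show False using \<open>i \<notin> dd\<close> by simp
        qed
        then have "u (ii i') = 0" using u Cd by (auto simp: Rvec_def)
        then show "x \<bullet> i = 0" by (simp add: u i' inner_axis e_def)
      qed
    qed
    have "aff_dim C' \<le> aff_dim (span Sd)" by (rule aff_dim_subset) (use C'Sd span_superset in blast)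
    also have "\<dots> = int (dim Sd)" by (simp add: aff_dim_subspace)
    finally have "aff_dim C' \<le> int d" using dimSd by simp
    then show ?thesis using main by (simp add: affdim_def)
  qed
qed

theorem mainTheorem14:
  fixes L :: "real^'k^'n"
  assumes nonneg: "\<forall>i j. 0 \<le> L $ i $ j"
    and standing: "\<forall>t. \<exists>q\<in>prob_simplex. argmin_loss L q = {t}"
    and hyp: "\<exists>p\<in>relint_prob_simplex. \<exists>c::real. 0 \<le> c \<and> (\<forall>t. p \<bullet> column t L = c)"
  shows "ereal (real_of_int (affdim L - 1)) \<le> (case CCdim L of enat d \<Rightarrow> ereal (real d) | \<infinity> \<Rightarrow> \<infinity>)"
proof -
  obtain p c where p: "p \<in> relint_prob_simplex" and pc: "\<forall>t. p \<bullet> column t L = c" using hyp by blast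
  define D where "D = {d. convex_calibrated_surrogate_exists L d}"
  have bnd: "affdim L - 1 \<le> int d" if "d \<in> D" for d
    using surrogate_bound[OF p pc] that by (simp add: D_def)
  show ?thesis
  proof (cases "D = {}")
    case True
    then have "CCdim L = \<infinity>" by (simp add: CCdim_def D_def[symmetric] Inf_enat_def)
    then show ?thesis by simp
  next
    case False
    then have "enat ` D \<noteq> {}" by simp
    have "(LEAST x. x \<in> enat ` D) \<in> enat ` D" by (rule LeastI_ex) (use False in blast)
    then have "CCdim L \<in> enat ` D" unfolding CCdim_def D_def[symmetric] Inf_enat_def
      using False by simp
    then obtain d0 where d0: "d0 \<in> D" "CCdim L = enat d0" by auto
    have "real_of_int (affdim L - 1) \<le> real_of_int (int d0)" using bnd[OF d0(1)] by (simp only: of_int_le_iff)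
    then show ?thesis using d0 by simp
  qed
qed


end
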